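(* Let $m$ be odd and $L=L'$. For $a\in\mathcal{R}$ the Lee weight of $ev(a)=(Tr(ax))_{x\in L'}$ is: (a) $0$ if $a=0$; (b) $3^{3m}$ if $a=(u-1)^2a_3$ with $a_3\in\mathbb{F}_{3^m}^*$; (c) $3^{3m}-3^{2m}$ if $a\in\mathcal{R}\setminus\langle (u-1)^2\rangle$.
   Context: Let $R=\mathbb{F}_3[u]/(u^3-1)$ and $\mathcal{R}=\mathbb{F}_{3^m}[u]/(u^3-1)=\mathbb{F}_{3^m}+u\mathbb{F}_{3^m}+u^2\mathbb{F}_{3^m}$. Every element of $\mathcal{R}$ is uniquely $x_1+x_2(u-1)+x_3(u-1)^2$ with $x_i\in\mathbb{F}_{3^m}$; units are those with $x_1\neq0$. $\langle (u-1)^2\rangle=\{(u-1)^2a_3:a_3\in\mathbb{F}_{3^m}\}$. $Tr:\mathcal{R}\to R$ is $Tr(a+ub+u^2c)=tr(a)+u\,tr(b)+u^2tr(c)$, with $tr$ the absolute trace $\mathbb{F}_{3^m}\to\mathbb{F}_3$. $\mathcal{Q}$ denotes the nonzero squares of $\mathbb{F}_{3^m}$; $L'=\{x_1+x_2(u-1)+x_3(u-1)^2:x_1\in\mathcal{Q},x_2,x_3\in\mathbb{F}_{3^m}\}$. The Gray map $\phi:R\to\mathbb{F}_3^3$ is $\phi(a'+ub'+u^2c')=(a',b',c')$, extended coordinatewise to $R^n\to\mathbb{F}_3^{3n}$; the Lee weight $w_L(v)$ of $v\in R^n$ is the Hamming weight of $\phi(v)$. *)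

theory Defs
  imports Main
begin

text \<open>The field F_{3^m} is modelled by a finite field type 'a with CARD('a) = 3^m.
An element a + u b + u^2 c of R = F_{3^m}[u]/(u^3-1) is the triple (a, b, c).\<close>

type_synonym 'a uring = "'a \<times> 'a \<times> 'a"

definition rmul :: "'a::comm_ring_1 uring \<Rightarrow> 'a uring \<Rightarrow> 'a uring" where
  "rmul x y = (case x of (a, b, c) \<Rightarrow> case y of (a', b', c') \<Rightarrow>
     (a*a' + b*c' + c*b', a*b' + b*a' + c*c', a*c' + b*b' + c*a'))"

text \<open>The element x1 + x2 (u-1) + x3 (u-1)^2, expanded in the basis 1, u, u^2.\<close>
definition ufrom :: "'a::comm_ring_1 \<Rightarrow> 'a \<Rightarrow> 'a \<Rightarrow> 'a uring" where
  "ufrom x1 x2 x3 = (x1 - x2 + x3, x2 - 2*x3, x3)"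

text \<open>Absolute trace F_{3^m} \<rightarrow> F_3 (values lie in the prime subfield).\<close>
definition tr :: "nat \<Rightarrow> 'a::comm_ring_1 \<Rightarrow> 'a" where
  "tr m x = (\<Sum>i<m. x ^ (3 ^ i))"

definition Tr :: "nat \<Rightarrow> 'a::comm_ring_1 uring \<Rightarrow> 'a uring" where
  "Tr m x = (case x of (a, b, c) \<Rightarrow> (tr m a, tr m b, tr m c))"

definition Qsq :: "'a::comm_ring_1 set" where
  "Qsq = {y. y \<noteq> 0 \<and> (\<exists>z. y = z^2)}"

definition Lprime :: "'a::comm_ring_1 uring set" where
  "Lprime = {ufrom x1 x2 x3 | x1 x2 x3. x1 \<in> Qsq}"

text \<open>Lee weight of an element of R = F_3[u]/(u^3-1): Hamming weight of its Gray image
  (a', b', c'), i.e. the number of nonzero coordinates.\<close>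
definition lee_wt1 :: "'a::zero uring \<Rightarrow> nat" where
  "lee_wt1 x = (case x of (a, b, c) \<Rightarrow>
     (if a \<noteq> 0 then 1 else 0) + (if b \<noteq> 0 then 1 else 0) + (if c \<noteq> 0 then 1 else 0))"

definition lee_wt :: "'i set \<Rightarrow> ('i \<Rightarrow> 'a::zero uring) \<Rightarrow> nat" where
  "lee_wt I v = (\<Sum>i\<in>I. lee_wt1 (v i))"

definition ev :: "nat \<Rightarrow> 'a::comm_ring_1 uring \<Rightarrow> 'a uring \<Rightarrow> 'a uring" where
  "ev m a = (\<lambda>x. Tr m (rmul a x))"

definition ideal_u1sq :: "'a::comm_ring_1 uring set" where
  "ideal_u1sq = {ufrom 0 0 a3 | a3. True}"

end

theory Submission
  imports Defs "HOL-Computational_Algebra.Polynomial"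
begin

lemma card_times_zero:
  fixes x :: "'a::{field,finite}"
  shows "of_nat (card (UNIV::'a set)) * x = 0"
proof -
  have "(\<Sum>y\<in>UNIV. x + y) = (\<Sum>y\<in>UNIV. y)"
    by (rule sum.reindex_bij_witness[where i="\<lambda>y. y - x" and j="\<lambda>y. x + y"]) auto
  then show ?thesis by (simp add: sum.distrib)
qed

lemma char3:
  assumes "card (UNIV::'a::{field,finite} set) = 3 ^ m"
  shows "(3::'a) = 0"
proof -
  have "of_nat (3^m) * (1::'a) = 0" using card_times_zero[of "1::'a"] assms by simp
  hence "(3::'a)^m = 0" by simp
  thus ?thesis by simp
qed

lemma frob1:
  fixes x y :: "'a::comm_ring_1"
  assumes "(3::'a) = 0"
  shows "(x+y)^3 = x^3 + y^3"
proof -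
  have "(x+y)^3 = x^3 + 3*(x^2*y + x*y^2) + y^3" by (simp add: algebra_simps power2_eq_square power3_eq_cube)
  thus ?thesis using assms by simp
qed

lemma frob:
  fixes x y :: "'a::comm_ring_1"
  assumes "(3::'a) = 0"
  shows "(x+y)^(3^i) = x^(3^i) + y^(3^i)"
proof (induction i)
  case 0 then show ?case by simp
next
  case (Suc i)
  have "(x+y)^(3^Suc i) = ((x+y)^(3^i))^3" by (simp add: power_mult[symmetric] mult.commute)
  also have "\<dots> = (x^(3^i))^3 + (y^(3^i))^3" using Suc frob1[OF assms] by simp
  also have "\<dots> = x^(3^Suc i) + y^(3^Suc i)" by (simp add: power_mult[symmetric] mult.commute)
  finally show ?case .
qed

lemma tr_add: assumes "(3::'a::comm_ring_1) = 0" shows "tr m (x+y) = tr m x + tr m (y::'a)"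
  unfolding tr_def by (simp add: frob[OF assms] sum.distrib)

lemma tr_neg: "tr m (-x) = - tr m (x::'a::comm_ring_1)"
  unfolding tr_def by (simp add: sum_negf)

lemma tr_zero: "tr m (0::'a::comm_ring_1) = 0"
  unfolding tr_def by (simp add: power_0_left)

lemma sum_cube: assumes "(3::'a::comm_ring_1) = 0"
  shows "(sum f A)^3 = sum (\<lambda>i. (f i :: 'a)^3) A"
proof (induction A rule: infinite_finite_induct)
  case (insert x F) then show ?case using frob1[OF assms] by simp
qed auto

lemma fermat:
  fixes x :: "'a::{field,finite}"
  shows "x ^ (card (UNIV::'a set)) = x"
proof (cases "x = 0")
  case True then show ?thesis by (simp add: finite_UNIV_card_ge_0)
next
  case False
  let ?S = "UNIV - {0::'a}"
  have "(\<Prod>y\<in>?S. x * y) = (\<Prod>y\<in>?S. y)"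
    by (rule prod.reindex_bij_witness[where i="\<lambda>y. y / x" and j="\<lambda>y. x * y"]) (use False in auto)
  moreover have "(\<Prod>y\<in>?S. x * y) = x ^ card ?S * (\<Prod>y\<in>?S. y)"
    by (simp add: prod.distrib)
  moreover have "(\<Prod>y\<in>?S. y) \<noteq> 0" by simp
  ultimately have "x ^ card ?S = 1" by simp
  moreover have "card ?S = card (UNIV::'a set) - 1" by (simp add: card_Diff_singleton)
  moreover have "card (UNIV::'a set) \<ge> 1" by (simp add: finite_UNIV_card_ge_0 Suc_leI)
  ultimately have "card (UNIV::'a set) = Suc (card ?S)" "x ^ card ?S = 1" by auto
  then show ?thesis by (simp only: power_Suc) simp
qed

lemma tr_cube:
  assumes card: "card (UNIV::'a::{field,finite} set) = 3 ^ m" and m: "m \<ge> 1"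
  shows "(tr m (x::'a))^3 = tr m x"
proof -
  have c3: "(3::'a) = 0" using char3[OF card] .
  let ?f = "\<lambda>i. x^(3^i)"
  have "(tr m x)^3 = (\<Sum>i<m. ?f (Suc i))"
    unfolding tr_def sum_cube[OF c3] by (simp add: power_mult[symmetric] mult.commute)
  also have "\<dots> = (\<Sum>i<m. ?f i)"
  proof -
    have "(\<Sum>i<Suc m. ?f i) = ?f 0 + (\<Sum>i<m. ?f (Suc i))" by (rule sum.lessThan_Suc_shift)
    moreover have "(\<Sum>i<Suc m. ?f i) = (\<Sum>i<m. ?f i) + ?f m" by simp
    moreover have "?f m = x" using fermat[of x] card by simp
    ultimately show ?thesis by simp
  qed
  finally show ?thesis unfolding tr_def .
qed

lemma cube_vals:
  fixes t :: "'a::field"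
  assumes "t^3 = t" shows "t = 0 \<or> t = 1 \<or> t = -1"
proof -
  have "t * (t - 1) * (t + 1) = t^3 - t" by (simp add: algebra_simps power3_eq_cube)
  hence "t * (t - 1) * (t + 1) = 0" using assms by simp
  thus ?thesis by (auto simp: eq_neg_iff_add_eq_0)
qed

lemma tr_nonzero:
  assumes card: "card (UNIV::'a::{field,finite} set) = 3 ^ m" and m: "m \<ge> 1"
  shows "\<exists>x::'a. tr m x \<noteq> 0"
proof (rule ccontr)
  assume "\<not> ?thesis"
  hence all0: "\<forall>x::'a. tr m x = 0" by simp
  define P :: "'a poly" where "P = (\<Sum>i<m. monom 1 (3^i))"
  have polyP: "poly P x = tr m x" for x
    unfolding P_def tr_def by (simp add: poly_sum poly_monom)
  have "coeff P (3^(m-1)) = (\<Sum>i<m. if i = m - 1 then 1 else 0)"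
    unfolding P_def coeff_sum by (intro sum.cong) auto
  also have "\<dots> = 1" using m by simp
  finally have "P \<noteq> 0" by auto
  hence "card {x. poly P x = 0} \<le> degree P" by (rule card_poly_roots_bound)
  moreover have "degree P \<le> 3^(m-1)"
    unfolding P_def
  proof (rule degree_sum_le)
    fix i assume "i \<in> {..<m}"
    hence "3^i \<le> (3::nat)^(m-1)" by (intro power_increasing) auto
    thus "degree (monom (1::'a) (3^i)) \<le> 3^(m-1)" using degree_monom_le order_trans by blast
  qed simp
  moreover have "{x. poly P x = 0} = UNIV" using all0 polyP by auto
  ultimately have "(3::nat)^m \<le> 3^(m-1)" using card by (metis order_trans)
  thus False using m by simp
qed

lemma one_neq_neg_one:
  assumes "(3::'a::field) = 0" shows "(1::'a) \<noteq> -1"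
proof
  assume "(1::'a) = -1"
  hence "(2::'a) = 0" by (simp add: eq_neg_iff_add_eq_0)
  moreover have "(3::'a) = 2 + 1" by simp
  ultimately have "(3::'a) = 1" by simp
  thus False using assms by simp
qed

lemma two_neq0:
  assumes "(3::'a::field) = 0" shows "(2::'a) \<noteq> 0"
  using one_neq_neg_one[OF assms] by (auto simp: eq_neg_iff_add_eq_0)

lemma ker_card:
  assumes card: "card (UNIV::'a::{field,finite} set) = 3 ^ m" and m: "m \<ge> 1"
  shows "3 * card {x::'a. tr m x = 0} = 3 ^ m"
proof -
  have c3: "(3::'a) = 0" using char3[OF card] .
  obtain x1 :: 'a where x1: "tr m x1 \<noteq> 0" using tr_nonzero[OF card m] by blast
  have "tr m x1 = 1 \<or> tr m x1 = -1" using cube_vals[OF tr_cube[OF card m]] x1 by blast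
  then obtain x0 :: 'a where x0: "tr m x0 = 1"
  proof
    assume "tr m x1 = -1" hence "tr m (-x1) = 1" using tr_neg[of m x1] by simp
    thus ?thesis using that by blast
  qed (use that in blast)
  define F where "F t = {x::'a. tr m x = t}" for t
  have tradd: "tr m (x + y) = tr m x + tr m y" for x y :: 'a using tr_add[OF c3] .
  have trdiff: "tr m (x - y) = tr m x - tr m y" for x y :: 'a
    using tradd[of x "-y"] tr_neg[of m y] by simp
  have F1: "F 1 = (\<lambda>x. x + x0) ` F 0"
  proof (rule set_eqI, rule iffI)
    fix y assume "y \<in> F 1"
    hence "y - x0 \<in> F 0" using trdiff x0 by (simp add: F_def)
    thus "y \<in> (\<lambda>x. x + x0) ` F 0" by (rule rev_image_eqI) simp
  qed (auto simp: F_def tradd x0)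
  have F2: "F (-1) = (\<lambda>x. x - x0) ` F 0"
  proof (rule set_eqI, rule iffI)
    fix y assume "y \<in> F (-1)"
    hence "y + x0 \<in> F 0" using tradd x0 by (simp add: F_def)
    thus "y \<in> (\<lambda>x. x - x0) ` F 0" by (rule rev_image_eqI) simp
  qed (auto simp: F_def trdiff x0)
  have cF1: "card (F 1) = card (F 0)" unfolding F1 by (rule card_image) (simp add: inj_on_def)
  have cF2: "card (F (-1)) = card (F 0)" unfolding F2 by (rule card_image) (simp add: inj_on_def)
  have U: "UNIV = F 0 \<union> F 1 \<union> F (-1)"
    using cube_vals[OF tr_cube[OF card m]] by (auto simp: F_def)
  have n1: "(1::'a) \<noteq> -1" using one_neq_neg_one[OF c3] .
  have "card (UNIV::'a set) = card (F 0 \<union> F 1) + card (F (-1))"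
    unfolding U by (rule card_Un_disjoint) (use n1 in \<open>auto simp: F_def\<close>)
  also have "card (F 0 \<union> F 1) = card (F 0) + card (F 1)"
    by (rule card_Un_disjoint) (auto simp: F_def)
  finally show ?thesis using card cF1 cF2 by (simp add: F_def)
qed

lemma N_card:
  assumes card: "card (UNIV::'a::{field,finite} set) = 3 ^ m" and m: "m \<ge> 1"
  shows "card {x::'a. tr m x \<noteq> 0} = 2 * 3 ^ (m - 1)"
proof -
  have k: "3 * card {x::'a. tr m x = 0} = 3 ^ m" by (rule ker_card[OF card m])
  have "3 ^ m = 3 * (3::nat) ^ (m-1)" using m by (cases m) auto
  hence k': "card {x::'a. tr m x = 0} = 3 ^ (m-1)" using k by simp
  have "{x::'a. tr m x \<noteq> 0} = UNIV - {x. tr m x = 0}" by auto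
  hence "card {x::'a. tr m x \<noteq> 0} = 3 ^ m - 3 ^ (m-1)"
    using card k' by (simp add: card_Diff_subset)
  also have "\<dots> = 2 * 3 ^ (m - 1)" using \<open>3 ^ m = 3 * (3::nat) ^ (m-1)\<close> by simp
  finally show ?thesis .
qed

lemma pow3_odd: "odd m \<Longrightarrow> \<exists>k. (3::nat) ^ m = 4 * k + 3"
proof -
  assume "odd m"
  then obtain j where j: "m = 2 * j + 1" by (metis oddE)
  have "(9::nat) ^ j mod 4 = 1"
  proof -
    have "(9::nat) ^ j mod 4 = (9 mod 4) ^ j mod 4" by (rule power_mod[symmetric])
    thus ?thesis by simp
  qed
  hence "(9::nat) ^ j = 4 * (9 ^ j div 4) + 1" by (metis div_mult_mod_eq mult.commute)
  moreover have "(3::nat) ^ m = 3 * 9 ^ j" by (simp add: j power_mult)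
  ultimately have "(3::nat) ^ m = 4 * (3 * (9 ^ j div 4)) + 3" by simp
  thus ?thesis by blast
qed

lemma minus_one_nonsq:
  assumes card: "card (UNIV::'a::{field,finite} set) = 3 ^ m" and m: "odd m"
  shows "(z::'a)^2 \<noteq> -1"
proof
  assume z: "z^2 = -1"
  have c3: "(3::'a) = 0" using char3[OF card] .
  obtain k where k: "(3::nat) ^ m = 4 * k + 3" using pow3_odd[OF m] by blast
  have "z ^ (card (UNIV::'a set)) = z" by (rule fermat)
  hence e1: "z ^ (4 * k + 3) = z" by (simp only: card k)
  have e2: "z ^ (4 * k + 3) = z ^ (2*(2*k) + 2 + 1)"
    by (rule arg_cong[where f="\<lambda>n. z^n"]) simp
  have e3: "z ^ (2*(2*k) + 2 + 1) = (z^2)^(2*k) * (z^2) * z"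
    by (simp only: power_add power_mult power_one_right)
  have e4: "(z^2)^(2*k) = 1" by (simp only: z) simp
  have "z = z ^ (4 * k + 3)" by (rule e1[symmetric])
  also have "\<dots> = z ^ (2*(2*k) + 2 + 1)" by (rule e2)
  also have "\<dots> = (z^2)^(2*k) * (z^2) * z" by (rule e3)
  also have "\<dots> = -z" by (simp only: e4 z) simp
  finally have zz: "z = -z" .
  hence "z + z = 0" by (rule eq_neg_iff_add_eq_0[THEN iffD1])
  hence "2 * z = 0" by (simp only: mult_2)
  hence "z = 0" using two_neq0[OF c3] by simp
  thus False using z by simp
qed

lemma Qsq_card:
  assumes card: "card (UNIV::'a::{field,finite} set) = 3 ^ m"
  shows "2 * card (Qsq :: 'a set) = 3 ^ m - 1"
proof -
  have c3: "(3::'a) = 0" using char3[OF card] .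
  have U: "UNIV - {0::'a} = (\<Union>s\<in>Qsq. {z. z^2 = s})"
    by (auto simp: Qsq_def)
  have two: "card {z::'a. z^2 = s} = 2" if sQ: "s \<in> Qsq" for s
  proof -
    obtain w :: 'a where w1: "s = w^2" using sQ unfolding Qsq_def by blast
    have w: "s = w^2" "w \<noteq> 0" using w1 sQ by (auto simp: Qsq_def)
    have "{z::'a. z^2 = s} = {w, -w}"
      using w by (auto simp: power2_eq_iff)
    moreover have "w \<noteq> -w"
    proof
      assume "w = -w" hence "w + w = 0" by (rule eq_neg_iff_add_eq_0[THEN iffD1])
      hence "2 * w = 0" by (simp only: mult_2)
      thus False using w two_neq0[OF c3] by simp
    qed
    ultimately show ?thesis by simp
  qed
  have "card (UNIV - {0::'a}) = (\<Sum>s\<in>Qsq. card {z::'a. z^2 = s})"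
    unfolding U by (rule card_UN_disjoint) auto
  also have "\<dots> = (\<Sum>s\<in>(Qsq::'a set). 2)" using two by simp
  finally show ?thesis using card by (simp add: card_Diff_singleton)
qed

lemma Qsq_disj:
  assumes card: "card (UNIV::'a::{field,finite} set) = 3 ^ m" and m: "odd m"
  shows "(Qsq::'a set) \<inter> uminus ` Qsq = {}"
proof (rule ccontr)
  assume "\<not> ?thesis"
  then obtain s t :: 'a where st: "s \<in> Qsq" "t \<in> Qsq" "s = -t" by auto
  obtain z where z: "s = z^2" using st(1) unfolding Qsq_def by blast
  obtain w where w: "t = w^2" using st(2) unfolding Qsq_def by blast
  have w0: "w \<noteq> 0" using st(2) w by (auto simp: Qsq_def)
  have "(z / w)^2 = s / t" using z w by (simp add: power_divide)
  also have "\<dots> = -1" using st w0 w by simp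
  finally show False using minus_one_nonsq[OF card m] by blast
qed

lemma Qsq_union:
  assumes card: "card (UNIV::'a::{field,finite} set) = 3 ^ m" and m: "odd m"
  shows "(Qsq::'a set) \<union> uminus ` Qsq = UNIV - {0}"
proof (rule card_subset_eq)
  show "finite (UNIV - {0::'a})" by simp
  show "Qsq \<union> uminus ` Qsq \<subseteq> UNIV - {0::'a}" by (auto simp: Qsq_def)
  have "card ((Qsq::'a set) \<union> uminus ` Qsq) = card (Qsq::'a set) + card (uminus ` (Qsq::'a set))"
    by (rule card_Un_disjoint) (use Qsq_disj[OF card m] in auto)
  also have "card (uminus ` (Qsq::'a set)) = card (Qsq::'a set)" by (rule card_image) (simp add: inj_on_def)
  finally show "card ((Qsq::'a set) \<union> uminus ` Qsq) = card (UNIV - {0::'a})"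
    using Qsq_card[OF card] card by (simp add: card_Diff_singleton)
qed

lemma S_count:
  assumes card: "card (UNIV::'a::{field,finite} set) = 3 ^ m" and m: "odd m" and c: "(c::'a) \<noteq> 0"
  shows "card {y \<in> Qsq. tr m (c*y) \<noteq> 0} = 3 ^ (m - 1)"
proof -
  have m1: "m \<ge> 1" using m by (cases m) auto
  define T where "T = {y::'a. tr m (c*y) \<noteq> 0}"
  have "(\<lambda>y. c * y) ` T = {x. tr m x \<noteq> 0}"
  proof (rule set_eqI, rule iffI)
    fix x :: 'a assume "x \<in> {x. tr m x \<noteq> 0}"
    hence "x / c \<in> T" using c by (simp add: T_def)
    moreover have "x = c * (x / c)" using c by simp
    ultimately show "x \<in> (\<lambda>y. c * y) ` T" by blast
  qed (auto simp: T_def)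
  moreover have "inj_on (\<lambda>y. c * y) T" using c by (simp add: inj_on_def)
  ultimately have cT: "card T = 2 * 3 ^ (m - 1)" using N_card[OF card m1] card_image by metis
  have T0: "0 \<notin> T" by (simp add: T_def tr_zero)
  have "T = T \<inter> (UNIV - {0})" using T0 by auto
  also have "\<dots> = (T \<inter> Qsq) \<union> (T \<inter> uminus ` Qsq)" using Qsq_union[OF card m] by auto
  finally have TU: "T = (T \<inter> Qsq) \<union> (T \<inter> uminus ` Qsq)" .
  have "T \<inter> uminus ` Qsq = uminus ` (T \<inter> Qsq)"
  proof (rule set_eqI, rule iffI)
    fix x assume "x \<in> T \<inter> uminus ` Qsq"
    then obtain y where y: "y \<in> Qsq" "x = -y" "x \<in> T" by auto
    hence "y \<in> T" using tr_neg[of m "c*y"] by (simp add: T_def)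
    thus "x \<in> uminus ` (T \<inter> Qsq)" using y by blast
  next
    fix x assume "x \<in> uminus ` (T \<inter> Qsq)"
    then obtain y where y: "y \<in> Qsq" "x = -y" "y \<in> T" by auto
    hence "x \<in> T" using tr_neg[of m "c*y"] by (simp add: T_def)
    thus "x \<in> T \<inter> uminus ` Qsq" using y by blast
  qed
  hence c2: "card (T \<inter> uminus ` Qsq) = card (T \<inter> Qsq)"
    by (simp add: card_image inj_on_def)
  have "card T = card (T \<inter> Qsq) + card (T \<inter> uminus ` Qsq)"
    by (subst TU, rule card_Un_disjoint) (use Qsq_disj[OF card m] in auto)
  hence "2 * card (T \<inter> Qsq) = 2 * 3 ^ (m - 1)" using cT c2 by simp
  moreover have "{y \<in> Qsq. tr m (c*y) \<noteq> 0} = T \<inter> Qsq" by (auto simp: T_def)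
  ultimately show ?thesis by simp
qed

definition ind :: "'a::zero \<Rightarrow> nat" where "ind t = (if t \<noteq> 0 then 1 else 0)"

lemma sum_ind_tr: "(\<Sum>y\<in>UNIV. ind (tr m (y::'a::{field,finite}))) = card {x::'a. tr m x \<noteq> 0}"
proof -
  have "card {x::'a. tr m x \<noteq> 0} = (\<Sum>y\<in>{x::'a\<in>UNIV. tr m x \<noteq> 0}. (1::nat))" by simp
  also have "\<dots> = (\<Sum>y\<in>UNIV. if tr m (y::'a) \<noteq> 0 then 1 else 0)" by (rule sum.inter_filter) simp
  finally show ?thesis by (simp add: ind_def)
qed

lemma sum_ind_shift:
  fixes c d :: "'a::{field,finite}"
  assumes "d \<noteq> 0"
  shows "(\<Sum>y\<in>UNIV. ind (tr m (c + d * y))) = card {x::'a. tr m x \<noteq> 0}"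
proof -
  have "(\<Sum>y\<in>UNIV. ind (tr m (c + d * y))) = (\<Sum>y\<in>UNIV. ind (tr m (y::'a)))"
    by (rule sum.reindex_bij_witness[where i="\<lambda>z. (z - c) / d" and j="\<lambda>y. c + d * y"])
      (use assms in auto)
  thus ?thesis using sum_ind_tr by simp
qed

lemma lin_count:
  fixes c b g :: "'a::{field,finite}"
  assumes "b \<noteq> 0 \<or> g \<noteq> 0"
  shows "(\<Sum>x2\<in>UNIV. \<Sum>x3\<in>UNIV. ind (tr m (c + b * x2 + g * x3)))
     = card (UNIV::'a set) * card {x::'a. tr m x \<noteq> 0}"
proof (cases "g = 0")
  case False
  have "(\<Sum>x2\<in>UNIV. \<Sum>x3\<in>UNIV. ind (tr m (c + b * x2 + g * x3)))
     = (\<Sum>x2\<in>(UNIV::'a set). card {x::'a. tr m x \<noteq> 0})"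
    using sum_ind_shift[OF False, of m "c + b * _"] by simp
  thus ?thesis by simp
next
  case True
  hence b: "b \<noteq> 0" using assms by simp
  have "(\<Sum>x2\<in>UNIV. \<Sum>x3\<in>UNIV. ind (tr m (c + b * x2 + g * x3)))
     = (\<Sum>x2\<in>UNIV. card (UNIV::'a set) * ind (tr m (c + b * x2)))"
    using True by simp
  also have "\<dots> = card (UNIV::'a set) * card {x::'a. tr m x \<noteq> 0}"
    by (simp add: sum_distrib_left[symmetric] sum_ind_shift[OF b])
  finally show ?thesis .
qed

lemma Lprime_img: "(Lprime :: 'a::comm_ring_1 uring set) = (\<lambda>(x1,x2,x3). ufrom x1 x2 x3) ` (Qsq \<times> UNIV \<times> UNIV)"
  unfolding Lprime_def by (auto simp: image_iff) (metis mem_Sigma_iff UNIV_I)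

lemma ufrom_inj: "inj (\<lambda>(x1,x2,x3). ufrom x1 x2 (x3::'a::comm_ring_1))"
  by (auto simp: inj_on_def ufrom_def)

lemma lee_wt_Lprime:
  fixes f :: "'a::{field,finite} uring \<Rightarrow> 'a uring"
  shows "lee_wt Lprime f = (\<Sum>x1\<in>Qsq. \<Sum>x2\<in>UNIV. \<Sum>x3\<in>UNIV. lee_wt1 (f (ufrom x1 x2 x3)))"
proof -
  have "lee_wt Lprime f = (\<Sum>x\<in>Qsq \<times> UNIV \<times> UNIV. lee_wt1 (f ((\<lambda>(x1,x2,x3). ufrom x1 x2 x3) x)))"
    unfolding lee_wt_def Lprime_img
    by (subst sum.reindex) (auto intro: inj_on_subset[OF ufrom_inj])
  also have "\<dots> = (\<Sum>x1\<in>Qsq. \<Sum>x2\<in>UNIV. \<Sum>x3\<in>UNIV. lee_wt1 (f (ufrom x1 x2 x3)))"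
    by (simp add: sum.cartesian_product split_def)
  finally show ?thesis .
qed

lemma rmul_ufrom:
  "rmul (p,q,r) (ufrom x1 x2 x3) =
    (p*x1 + (r-p)*x2 + (p+q-2*r)*x3, q*x1 + (p-q)*x2 + (q+r-2*p)*x3, r*x1 + (q-r)*x2 + (p+r-2*q)*(x3::'a::comm_ring_1))"
  by (simp add: rmul_def ufrom_def algebra_simps)

lemma lee_Tr: "lee_wt1 (Tr m (A,B,C)) = ind (tr m A) + ind (tr m B) + ind (tr m (C::'a::comm_ring_1))"
  by (simp add: lee_wt1_def Tr_def ind_def)

lemma gen_term:
  fixes al b g :: "'a::{field,finite}"
  assumes card: "card (UNIV::'a set) = 3 ^ m" and m: "m \<ge> 1" and bg: "b \<noteq> 0 \<or> g \<noteq> 0"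
  shows "(\<Sum>x1\<in>Qsq. \<Sum>x2\<in>UNIV. \<Sum>x3\<in>UNIV. ind (tr m (al*x1 + b * x2 + g * x3)))
     = card (Qsq::'a set) * (3^m * (2 * 3^(m-1)))"
  using lin_count[OF bg, of m] card N_card[OF card m] by simp

theorem theorem5p4:
  fixes m :: nat and a :: "'a::{field,finite} uring"
  assumes card: "card (UNIV :: 'a set) = 3 ^ m"
    and odd_m: "odd m"
  shows "(a = (0, 0, 0) \<longrightarrow> lee_wt Lprime (ev m a) = 0)
    \<and> (\<forall>a3. a3 \<noteq> 0 \<and> a = ufrom 0 0 a3 \<longrightarrow> lee_wt Lprime (ev m a) = 3 ^ (3 * m))
    \<and> (a \<notin> ideal_u1sq \<longrightarrow> lee_wt Lprime (ev m a) = 3 ^ (3 * m) - 3 ^ (2 * m))"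
proof (intro conjI impI allI)
  have c3: "(3::'a) = 0" using char3[OF card] .
  have m1: "m \<ge> 1" using odd_m by (cases m) auto
  obtain p q r where a: "a = (p, q, r)" by (cases a) auto
  have W: "lee_wt Lprime (ev m a) = (\<Sum>x1\<in>Qsq. \<Sum>x2\<in>UNIV. \<Sum>x3\<in>UNIV.
      ind (tr m (p*x1 + (r-p)*x2 + (p+q-2*r)*x3)) + ind (tr m (q*x1 + (p-q)*x2 + (q+r-2*p)*x3))
      + ind (tr m (r*x1 + (q-r)*x2 + (p+r-2*q)*x3)))"
    unfolding lee_wt_Lprime ev_def a rmul_ufrom lee_Tr ..
  have neg2: "-2 * x = x" for x :: 'a
  proof -
    have "-2 * x = x - 3 * x" by (simp add: algebra_simps)
    thus ?thesis using c3 by simp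
  qed
  {
    assume "a = (0, 0, 0)"
    hence "p = 0" "q = 0" "r = 0" using a by auto
    thus "lee_wt Lprime (ev m a) = 0" unfolding W by (simp add: tr_zero ind_def)
  }
  {
    fix a3 :: 'a assume h: "a3 \<noteq> 0 \<and> a = ufrom 0 0 a3"
    hence pqr: "p = a3" "q = a3" "r = a3" using a neg2[of a3] by (auto simp: ufrom_def)
    have "lee_wt Lprime (ev m a) = (\<Sum>x1\<in>Qsq. \<Sum>x2\<in>(UNIV::'a set). \<Sum>x3\<in>(UNIV::'a set). 3 * ind (tr m (a3*x1)))"
      unfolding W pqr by (simp add: numeral_3_eq_3 add.assoc)
    also have "\<dots> = 3 ^ m * 3 ^ m * 3 * (\<Sum>x1\<in>Qsq. ind (tr m (a3*x1)))"
      using card by (simp add: sum_distrib_left mult_ac)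
    also have "(\<Sum>x1\<in>Qsq. ind (tr m (a3*x1))) = card {y \<in> Qsq. tr m (a3*y) \<noteq> 0}"
    proof -
      have "card {y \<in> Qsq. tr m (a3*y) \<noteq> 0} = (\<Sum>y\<in>{y \<in> (Qsq::'a set). tr m (a3*y) \<noteq> 0}. (1::nat))" by simp
      also have "\<dots> = (\<Sum>y\<in>Qsq. if tr m (a3*y) \<noteq> 0 then 1 else 0)" by (rule sum.inter_filter) simp
      finally show ?thesis by (simp add: ind_def)
    qed
    also have "\<dots> = 3 ^ (m - 1)" using S_count[OF card odd_m] h by blast
    also have "3 ^ m * 3 ^ m * 3 * 3 ^ (m - 1) = (3::nat) ^ (3 * m)"
    proof -
      have "(3::nat) * 3 ^ (m - 1) = 3 ^ m" using m1 by (cases m) auto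
      hence "3 ^ m * 3 ^ m * 3 * 3 ^ (m - 1) = (3::nat) ^ m * 3 ^ m * 3 ^ m" by (simp only: mult.assoc)
      also have "\<dots> = 3 ^ (m + m + m)" by (simp only: power_add)
      also have "m + m + m = 3 * m" by simp
      finally show ?thesis .
    qed
    finally show "lee_wt Lprime (ev m a) = 3 ^ (3 * m)" .
  }
  {
    assume h: "a \<notin> ideal_u1sq"
    have npqr: "\<not> (p = q \<and> q = r)"
    proof
      assume "p = q \<and> q = r"
      hence "a = ufrom 0 0 p" using a neg2[of p] by (simp add: ufrom_def)
      thus False using h by (auto simp: ideal_u1sq_def)
    qed
    have b1: "r - p \<noteq> 0 \<or> p + q - 2*r \<noteq> 0" using npqr by (auto simp: algebra_simps mult_2)
    have b2: "p - q \<noteq> 0 \<or> q + r - 2*p \<noteq> 0" using npqr by (auto simp: algebra_simps mult_2)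
    have b3: "q - r \<noteq> 0 \<or> p + r - 2*q \<noteq> 0" using npqr by (auto simp: algebra_simps mult_2)
    have "lee_wt Lprime (ev m a) = 3 * (card (Qsq::'a set) * (3^m * (2 * 3^(m-1))))"
      unfolding W sum.distrib gen_term[OF card m1 b1] gen_term[OF card m1 b2] gen_term[OF card m1 b3] by simp
    also have "\<dots> = (2 * card (Qsq::'a set)) * 3^m * (3 * 3^(m-1))" by (simp add: mult_ac)
    also have "\<dots> = (3^m - 1) * 3^m * 3^m"
      using Qsq_card[OF card] m1 by (cases m) auto
    also have "\<dots> = 3 ^ (3 * m) - 3 ^ (2 * m)"
    proof -
      have "(3::nat) ^ (3 * m) = 3^m * 3^m * 3^m" "(3::nat) ^ (2 * m) = 3^m * 3^m"
        by (simp_all add: power_mult[symmetric] power_add[symmetric] mult_ac)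
      thus ?thesis by (simp add: diff_mult_distrib)
    qed
    finally show "lee_wt Lprime (ev m a) = 3 ^ (3 * m) - 3 ^ (2 * m)" .
  }
qed

end
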